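(* Let $T,P,S$ be real constants and consider, on $\{(x_3,y_4): 0<x_3<1,\ 0<y_4<1\}$, the system $$\dot x_3=x_3\bigl((T-2P+S)-(T-S)y_4\bigr)\,\frac{y_4(1-x_3)}{(1+y_4-x_3+y_4x_3)^2},\qquad \dot y_4=(1-y_4)\bigl((T-P)x_3-(P-S)\bigr)\,\frac{y_4(1-x_3)}{(1+y_4-x_3+y_4x_3)^2}.$$ Then the function $$H(x_3,y_4)=-(P-S)\bigl(\log x_3+2\log(1-y_4)\bigr)+(T-P)x_3-(T-S)y_4$$ is constant along every solution of this system.
   Context: This system describes the reduced learning dynamics in the exploitative regime of the prisoner's dilemma with payoffs $T>R>P>S$, where $x_3$ is the exploiting player's probability of cooperating after outcome DC and $y_4$ the exploited player's probability of cooperating after outcome DD. *)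

theory Defs
  imports "HOL-Analysis.Analysis"
begin

definition rate :: "real \<Rightarrow> real \<Rightarrow> real" where
  "rate x3 y4 = y4 * (1 - x3) / (1 + y4 - x3 + y4 * x3)^2"

definition fx3 :: "real \<Rightarrow> real \<Rightarrow> real \<Rightarrow> real \<Rightarrow> real \<Rightarrow> real" where
  "fx3 T P S x3 y4 = x3 * ((T - 2*P + S) - (T - S) * y4) * rate x3 y4"

definition fy4 :: "real \<Rightarrow> real \<Rightarrow> real \<Rightarrow> real \<Rightarrow> real \<Rightarrow> real" where
  "fy4 T P S x3 y4 = (1 - y4) * ((T - P) * x3 - (P - S)) * rate x3 y4"

definition Hfun :: "real \<Rightarrow> real \<Rightarrow> real \<Rightarrow> real \<Rightarrow> real \<Rightarrow> real" where
  "Hfun T P S x3 y4 = - (P - S) * (ln x3 + 2 * ln (1 - y4)) + (T - P) * x3 - (T - S) * y4"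

end

theory Submission
  imports Defs
begin

theorem mainTheorem2:
  fixes T P S :: real and x3 y4 :: "real \<Rightarrow> real" and I :: "real set"
  assumes "is_interval I"
    and "\<forall>t\<in>I. 0 < x3 t \<and> x3 t < 1 \<and> 0 < y4 t \<and> y4 t < 1"
    and "\<forall>t\<in>I. (x3 has_real_derivative fx3 T P S (x3 t) (y4 t)) (at t within I)"
    and "\<forall>t\<in>I. (y4 has_real_derivative fy4 T P S (x3 t) (y4 t)) (at t within I)"
  shows "\<forall>s\<in>I. \<forall>t\<in>I. Hfun T P S (x3 s) (y4 s) = Hfun T P S (x3 t) (y4 t)"
proof -
  have cv: "convex I" using assms(1) by (simp add: is_interval_convex)
  have D: "((\<lambda>t. Hfun T P S (x3 t) (y4 t)) has_derivative (\<lambda>h. 0)) (at t within I)"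
    if t: "t \<in> I" for t
  proof -
    let ?x = "x3 t" and ?y = "y4 t"
    have b: "0 < ?x" "?x < 1" "0 < ?y" "?y < 1" using assms(2) t by auto
    have dx: "(x3 has_real_derivative fx3 T P S ?x ?y) (at t within I)" using assms(3) t by auto
    have dy: "(y4 has_real_derivative fy4 T P S ?x ?y) (at t within I)" using assms(4) t by auto
    have "((\<lambda>t. Hfun T P S (x3 t) (y4 t)) has_real_derivative
        (- (P - S) * (fx3 T P S ?x ?y / ?x + 2 * (- fy4 T P S ?x ?y / (1 - ?y)))
          + (T - P) * fx3 T P S ?x ?y - (T - S) * fy4 T P S ?x ?y)) (at t within I)"
      unfolding Hfun_def
      using b
      apply (auto intro!: derivative_eq_intros dx dy)
      done
    moreover have "- (P - S) * (fx3 T P S ?x ?y / ?x + 2 * (- fy4 T P S ?x ?y / (1 - ?y)))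
          + (T - P) * fx3 T P S ?x ?y - (T - S) * fy4 T P S ?x ?y = 0"
      using b unfolding fx3_def fy4_def by (simp add: field_simps)
    ultimately have "((\<lambda>t. Hfun T P S (x3 t) (y4 t)) has_real_derivative 0) (at t within I)"
      by simp
    then show ?thesis unfolding has_field_derivative_def mult_zero_left[abs_def] .
  qed
  obtain c where "\<forall>x\<in>I. Hfun T P S (x3 x) (y4 x) = c"
    using has_derivative_zero_constant[OF cv] D by blast
  then show ?thesis by auto
qed

end
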